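(* Let $\{A_m\}_{m\ge0}$ and $\{B_m\}_{m\ge0}$ be integer-valued random processes with $A_0=B_0$. Suppose there exist $p^A_{ik}\in[0,1]$ such that for all $m\ge0$ and $k,i,i_0,\dots,i_{m-1}\in\mathbb{Z}$ (whenever the conditional probabilities are defined) $$p^A_{ik}=\mathbb{P}(A_{m+1}=k\mid A_{m+1}\ne i,A_m=i)=\mathbb{P}(A_{m+1}=k\mid A_{m+1}\ne i,A_m=i,A_{m-1}=i_{m-1},\dots,A_0=i_0),$$ and similarly for $B_m$ with numbers $p^B_{ik}$, and assume $p^A_{ik}=p^B_{ik}$ for all $i,k\in\mathbb{Z}$. Suppose further that for all $m\ge0$ and $i,i_0,\dots,i_{m-1},j_0,\dots,j_{m-1}\in\mathbb{Z}$ (whenever defined) $$\mathbb{P}(A_{m+1}\ne i\mid A_m=i,A_{m-1}=i_{m-1},\dots,A_0=i_0)\ge \mathbb{P}(B_{m+1}\ne i\mid B_m=i,B_{m-1}=j_{m-1},\dots,B_0=j_0).$$ Then for every $t\in\mathbb{N}$ and $\delta>0$, $$\mathbb{P}\Big(\max_{0\le m\le t}|A_m|\ge\delta\Big)\ge\mathbb{P}\Big(\max_{0\le m\le t}|B_m|\ge\delta\Big).$$ *)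

theory Defs
  imports "HOL-Probability.Probability"
begin

text \<open>Elementary conditional probability P(E | F) = P(E \<inter> F) / P(F); only used when P(F) > 0.\<close>
definition cprob :: "'a measure \<Rightarrow> 'a set \<Rightarrow> 'a set \<Rightarrow> real" where
  "cprob M E F = measure M (E \<inter> F) / measure M F"

definition hist_event :: "'a measure \<Rightarrow> (nat \<Rightarrow> 'a \<Rightarrow> int) \<Rightarrow> nat \<Rightarrow> (nat \<Rightarrow> int) \<Rightarrow> 'a set" where
  "hist_event M X m h = {x \<in> space M. \<forall>j\<le>m. X j x = h j}"

definition jump_kernel :: "'a measure \<Rightarrow> (nat \<Rightarrow> 'a \<Rightarrow> int) \<Rightarrow> (int \<Rightarrow> int \<Rightarrow> real) \<Rightarrow> bool" where
  "jump_kernel M X p \<longleftrightarrow>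
     (\<forall>m i k. let F = {x \<in> space M. X (Suc m) x \<noteq> i \<and> X m x = i} in
        measure M F > 0 \<longrightarrow> p i k = cprob M {x \<in> space M. X (Suc m) x = k} F) \<and>
     (\<forall>m i k h. h m = i \<longrightarrow>
        (let F = {x \<in> space M. X (Suc m) x \<noteq> i} \<inter> hist_event M X m h in
        measure M F > 0 \<longrightarrow> p i k = cprob M {x \<in> space M. X (Suc m) x = k} F))"

end

theory Submission imports Defs begin

definition Wf :: "(int \<Rightarrow> int \<Rightarrow> real) \<Rightarrow> (int \<Rightarrow> real) \<Rightarrow> int \<Rightarrow> real" where
  "Wf p f i = enn2real (min 1 (\<integral>\<^sup>+k. ennreal (p i k * f k) \<partial>count_space (UNIV - {i})))"

fun uu :: "(int \<Rightarrow> int \<Rightarrow> real) \<Rightarrow> (nat \<Rightarrow> int \<Rightarrow> real) \<Rightarrow> real \<Rightarrow> nat \<Rightarrow> nat \<Rightarrow> int \<Rightarrow> real" where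
  "uu p c \<delta> t 0 i = (if \<delta> \<le> real_of_int \<bar>i\<bar> then 1 else 0)"
| "uu p c \<delta> t (Suc n) i = (if \<delta> \<le> real_of_int \<bar>i\<bar> then 1 else
      (1 - c (t - Suc n) i) * uu p c \<delta> t n i + c (t - Suc n) i * Wf p (uu p c \<delta> t n) i)"

lemma Wf_nonneg: "0 \<le> Wf p f i" unfolding Wf_def by simp

lemma Wf_enn: "ennreal (Wf p f i) = min 1 (\<integral>\<^sup>+k. ennreal (p i k * f k) \<partial>count_space (UNIV - {i}))"
proof -
  have "min 1 (\<integral>\<^sup>+k. ennreal (p i k * f k) \<partial>count_space (UNIV - {i})) \<le> 1" by simp
  then have "min 1 (\<integral>\<^sup>+k. ennreal (p i k * f k) \<partial>count_space (UNIV - {i})) \<noteq> \<top>"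
    using ennreal_one_less_top by (metis leD)
  then show ?thesis unfolding Wf_def by (simp add: top.not_eq_extremum)
qed

lemma Wf_le1: "Wf p f i \<le> 1"
proof -
  have "ennreal (Wf p f i) \<le> 1" by (simp add: Wf_enn)
  then show ?thesis by (simp add: ennreal_le_1)
qed

lemma Wf_mono: assumes "\<And>i k. 0 \<le> p i k" "\<And>k. f k \<le> g k"
  shows "Wf p f i \<le> Wf p g i"
proof -
  have "(\<integral>\<^sup>+k. ennreal (p i k * f k) \<partial>count_space (UNIV - {i})) \<le> (\<integral>\<^sup>+k. ennreal (p i k * g k) \<partial>count_space (UNIV - {i}))"
    by (intro nn_integral_mono ennreal_leI mult_left_mono assms)
  then have "ennreal (Wf p f i) \<le> ennreal (Wf p g i)" unfolding Wf_enn by (rule min.mono[OF order_refl])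
  then show ?thesis using Wf_nonneg by (simp add: ennreal_le_iff)
qed

lemma uu_range: assumes "\<And>m i. 0 \<le> c m i \<and> c m i \<le> 1"
  shows "0 \<le> uu p c \<delta> t n i \<and> uu p c \<delta> t n i \<le> 1"
proof (induction n arbitrary: i)
  case 0 then show ?case by simp
next
  case (Suc n)
  define a where "a = uu p c \<delta> t n i"
  define w where "w = Wf p (uu p c \<delta> t n) i"
  define cc where "cc = c (t - Suc n) i"
  have a: "0 \<le> a" "a \<le> 1" using Suc a_def by auto
  have w: "0 \<le> w" "w \<le> 1" unfolding w_def by (simp_all add: Wf_nonneg Wf_le1)
  have c: "0 \<le> cc" "cc \<le> 1" using assms cc_def by auto
  have "0 \<le> (1 - cc) * a + cc * w" using a w c by simp
  moreover have "(1 - cc) * a + cc * w \<le> (1 - cc) * 1 + cc * 1"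
    using a w c by (intro add_mono mult_left_mono) auto
  ultimately show ?case by (simp add: a_def[symmetric] w_def[symmetric] cc_def[symmetric])
qed

lemma uu_mono: assumes c01: "\<And>m i. 0 \<le> c m i \<and> c m i \<le> 1" and pnn: "\<And>i k. 0 \<le> p i k"
  shows "(\<forall>k. uu p c \<delta> t n k \<le> uu p c \<delta> t (Suc n) k) \<and>
         (\<forall>i. \<not> \<delta> \<le> real_of_int \<bar>i\<bar> \<longrightarrow> uu p c \<delta> t n i \<le> Wf p (uu p c \<delta> t n) i)"
proof (induction n)
  case 0
  have W: "\<forall>i. \<not> \<delta> \<le> real_of_int \<bar>i\<bar> \<longrightarrow> uu p c \<delta> t 0 i \<le> Wf p (uu p c \<delta> t 0) i"
    by (simp add: Wf_nonneg)
  have "uu p c \<delta> t 0 k \<le> uu p c \<delta> t (Suc 0) k" for k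
    using c01[of "t - Suc 0" k] by (auto intro!: mult_nonneg_nonneg simp: Wf_nonneg)
  then show ?case using W by (simp only: ) blast
next
  case (Suc n)
  have W: "uu p c \<delta> t (Suc n) i \<le> Wf p (uu p c \<delta> t (Suc n)) i" if i: "\<not> \<delta> \<le> real_of_int \<bar>i\<bar>" for i
  proof -
    define a where "a = uu p c \<delta> t n i"
    define w where "w = Wf p (uu p c \<delta> t n) i"
    define cc where "cc = c (t - Suc n) i"
    have aw: "a \<le> w" using Suc.IH i a_def w_def by auto
    have c: "0 \<le> cc" "cc \<le> 1" using c01 cc_def by auto
    have "uu p c \<delta> t (Suc n) i = (1 - cc) * a + cc * w" using i by (simp add: a_def w_def cc_def)
    also have "\<dots> \<le> (1 - cc) * w + cc * w" using aw c by (intro add_mono mult_left_mono) auto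
    also have "\<dots> = w" by (simp add: algebra_simps)
    also have "w \<le> Wf p (uu p c \<delta> t (Suc n)) i" unfolding w_def
      using Suc.IH by (intro Wf_mono pnn) auto
    finally show ?thesis .
  qed
  have "uu p c \<delta> t (Suc n) k \<le> uu p c \<delta> t (Suc (Suc n)) k" for k
  proof (cases "\<delta> \<le> real_of_int \<bar>k\<bar>")
    case True then show ?thesis by simp
  next
    case False
    define a where "a = uu p c \<delta> t (Suc n) k"
    define w where "w = Wf p (uu p c \<delta> t (Suc n)) k"
    define cc where "cc = c (t - Suc (Suc n)) k"
    have aw: "a \<le> w" using W False a_def w_def by auto
    have c: "0 \<le> cc" "cc \<le> 1" using c01 cc_def by auto
    have "a = (1 - cc) * a + cc * a" by (simp add: algebra_simps)
    also have "\<dots> \<le> (1 - cc) * a + cc * w" using aw c by (intro add_mono mult_left_mono) auto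
    also have "\<dots> = uu p c \<delta> t (Suc (Suc n)) k" using False
      by (simp only: uu.simps(2)[of p c \<delta> t "Suc n" k] a_def w_def cc_def if_False)
    finally show ?thesis by (simp add: a_def)
  qed
  then show ?case using W by blast
qed

locale jproc = prob_space M for M :: "'a measure" +
  fixes X :: "nat \<Rightarrow> 'a \<Rightarrow> int" and p :: "int \<Rightarrow> int \<Rightarrow> real" and \<delta> :: real and t :: nat
  assumes meas[measurable]: "\<And>m. X m \<in> measurable M (count_space UNIV)"
    and jk: "jump_kernel M X p"
    and pnn: "\<And>i k. 0 \<le> p i k"
begin
definition Hit :: "nat \<Rightarrow> 'a set" where
  "Hit m = {x \<in> space M. \<exists>j\<in>{m..t}. \<delta> \<le> real_of_int \<bar>X j x\<bar>}"
abbreviation H where "H m h \<equiv> hist_event M X m h"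
definition F where "F m h = {x \<in> space M. X (Suc m) x \<noteq> h m} \<inter> H m h"

lemma sets_hist[measurable]: "hist_event M X m h \<in> sets M"
  unfolding hist_event_def by measurable
lemma sets_Hit[measurable]: "Hit m \<in> sets M"
proof -
  have "Hit m = (\<Union>j\<in>{m..t}. {x \<in> space M. \<delta> \<le> real_of_int \<bar>X j x\<bar>})"
    unfolding Hit_def by blast
  also have "\<dots> \<in> sets M" by (intro sets.finite_UN) auto
  finally show ?thesis .
qed
lemma sets_eq[measurable]: "{x \<in> space M. X j x = k} \<in> sets M"
  by measurable
lemma sets_neq[measurable]: "{x \<in> space M. X j x \<noteq> k} \<in> sets M"
  by measurable
lemma sets_F[measurable]: "F m h \<in> sets M"
  unfolding F_def by measurable

lemma hist_sub: "H m h \<subseteq> space M" unfolding hist_event_def by blast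

lemma L1: "H (Suc m) (h(Suc m := k)) = {x \<in> space M. X (Suc m) x = k} \<inter> H m h"
  unfolding hist_event_def by (auto simp: le_Suc_eq)

lemma L2: assumes "k \<noteq> h m"
  shows "measure M (H (Suc m) (h(Suc m := k))) = p (h m) k * measure M (F m h)"
proof (cases "measure M (F m h) > 0")
  case True
  have "p (h m) k = cprob M {x \<in> space M. X (Suc m) x = k} (F m h)"
    using jk True unfolding jump_kernel_def F_def Let_def by blast
  moreover have "{x \<in> space M. X (Suc m) x = k} \<inter> F m h = H (Suc m) (h(Suc m := k))"
    using assms unfolding L1 F_def by auto
  ultimately show ?thesis using True by (simp add: cprob_def)
next
  case False
  then have z: "measure M (F m h) = 0" using measure_nonneg[of M "F m h"] by linarith
  have "H (Suc m) (h(Suc m := k)) \<subseteq> F m h" using assms unfolding L1 F_def by auto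
  then have "measure M (H (Suc m) (h(Suc m := k))) \<le> measure M (F m h)"
    by (intro finite_measure_mono) auto
  then show ?thesis using z measure_nonneg[of M "H (Suc m) (h(Suc m := k))"] by simp
qed

lemma L3: "measure M (H (Suc m) (h(Suc m := h m))) = measure M (H m h) - measure M (F m h)"
proof -
  have "H m h = H (Suc m) (h(Suc m := h m)) \<union> F m h"
    using hist_sub[of m h] unfolding L1 F_def by blast
  moreover have "H (Suc m) (h(Suc m := h m)) \<inter> F m h = {}"
    unfolding L1 F_def by auto
  ultimately show ?thesis
    by (simp add: finite_measure_Union)
qed

lemma L6: "measure M (S \<inter> H m h) = measure M (S \<inter> H (Suc m) (h(Suc m := h m))) + measure M (S \<inter> F m h)"
  if [measurable]: "S \<in> sets M"
proof -
  have "S \<inter> H m h = (S \<inter> H (Suc m) (h(Suc m := h m))) \<union> (S \<inter> F m h)"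
    using hist_sub[of m h] unfolding L1 F_def by blast
  moreover have "(S \<inter> H (Suc m) (h(Suc m := h m))) \<inter> (S \<inter> F m h) = {}"
    unfolding L1 F_def by auto
  ultimately show ?thesis
    by (simp add: finite_measure_Union)
qed

lemma L4: assumes [measurable]: "S \<in> sets M"
  shows "emeasure M (S \<inter> F m h) = (\<integral>\<^sup>+k. emeasure M (S \<inter> H (Suc m) (h(Suc m := k))) \<partial>count_space (UNIV - {h m}))"
proof -
  have eq: "S \<inter> F m h = (\<Union>k\<in>UNIV - {h m}. S \<inter> H (Suc m) (h(Suc m := k)))"
    unfolding L1 F_def by auto
  have d: "disjoint_family_on (\<lambda>k. S \<inter> H (Suc m) (h(Suc m := k))) (UNIV - {h m})"
    unfolding disjoint_family_on_def L1 by auto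
  show ?thesis
    unfolding eq
  proof (rule emeasure_UN_countable)
    show "\<And>i. i \<in> UNIV - {h m} \<Longrightarrow> S \<inter> H (Suc m) (h(Suc m := i)) \<in> sets M" by measurable
  qed (use d in auto)
qed

lemma L5: assumes "\<not> \<delta> \<le> real_of_int \<bar>h m\<bar>"
  shows "Hit m \<inter> H m h = Hit (Suc m) \<inter> H m h"
proof (intro equalityI subsetI)
  fix x assume x: "x \<in> Hit m \<inter> H m h"
  then have xm: "X m x = h m" by (auto simp: hist_event_def)
  from x obtain j where j: "j \<in> {m..t}" "\<delta> \<le> real_of_int \<bar>X j x\<bar>" "x \<in> space M"
    by (auto simp: Hit_def)
  have "j \<noteq> m" using j xm assms by auto
  then have "j \<in> {Suc m..t}" using j by auto
  then have "x \<in> Hit (Suc m)" using j unfolding Hit_def by blast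
  then show "x \<in> Hit (Suc m) \<inter> H m h" using x by blast
next
  fix x assume x: "x \<in> Hit (Suc m) \<inter> H m h"
  then obtain j where j: "j \<in> {Suc m..t}" "\<delta> \<le> real_of_int \<bar>X j x\<bar>" "x \<in> space M"
    unfolding Hit_def by blast
  then have "j \<in> {m..t}" by auto
  then have "x \<in> Hit m" using j unfolding Hit_def by blast
  then show "x \<in> Hit m \<inter> H m h" using x by blast
qed

lemma lowF: assumes [measurable]: "S \<in> sets M" and f0: "\<And>k. 0 \<le> f k"
  and bnd: "\<And>k. k \<noteq> h m \<Longrightarrow> f k * measure M (H (Suc m) (h(Suc m:=k))) \<le> measure M (S \<inter> H (Suc m) (h(Suc m := k)))"
  shows "measure M (F m h) * Wf p f (h m) \<le> measure M (S \<inter> F m h)"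
proof -
  define I where "I = (\<integral>\<^sup>+k. ennreal (p (h m) k * f k) \<partial>count_space (UNIV - {h m}))"
  define mF where "mF = measure M (F m h)"
  have mF0: "0 \<le> mF" unfolding mF_def by simp
  have "ennreal (mF * Wf p f (h m)) = ennreal mF * min 1 I"
    using mF0 by (simp add: ennreal_mult Wf_nonneg Wf_enn I_def)
  also have "\<dots> \<le> ennreal mF * I" by (intro mult_left_mono) auto
  also have "\<dots> = (\<integral>\<^sup>+k. ennreal mF * ennreal (p (h m) k * f k) \<partial>count_space (UNIV - {h m}))"
    unfolding I_def by (simp add: nn_integral_cmult)
  also have "\<dots> \<le> (\<integral>\<^sup>+k. emeasure M (S \<inter> H (Suc m) (h(Suc m := k))) \<partial>count_space (UNIV - {h m}))"
  proof (intro nn_integral_mono)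
    fix k assume "k \<in> space (count_space (UNIV - {h m}))"
    then have k: "k \<noteq> h m" by auto
    have "ennreal mF * ennreal (p (h m) k * f k) = ennreal (f k * measure M (H (Suc m) (h(Suc m:=k))))"
      using L2[of k h m, OF k] mF0 f0[of k] pnn[of "h m" k] unfolding mF_def
      by (simp add: ennreal_mult[symmetric] mult_ac)
    also have "\<dots> \<le> ennreal (measure M (S \<inter> H (Suc m) (h(Suc m := k))))"
      using bnd[OF k] by (rule ennreal_leI)
    also have "\<dots> = emeasure M (S \<inter> H (Suc m) (h(Suc m := k)))"
      by (simp add: emeasure_eq_measure)
    finally show "ennreal mF * ennreal (p (h m) k * f k) \<le> emeasure M (S \<inter> H (Suc m) (h(Suc m := k)))" .
  qed
  also have "\<dots> = emeasure M (S \<inter> F m h)" by (rule L4[symmetric]) simp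
  also have "\<dots> = ennreal (measure M (S \<inter> F m h))" by (simp add: emeasure_eq_measure)
  finally show ?thesis unfolding mF_def by (simp add: ennreal_le_iff)
qed

lemma upF: assumes [measurable]: "S \<in> sets M" and f0: "\<And>k. 0 \<le> f k"
  and bnd: "\<And>k. k \<noteq> h m \<Longrightarrow> measure M (S \<inter> H (Suc m) (h(Suc m := k))) \<le> f k * measure M (H (Suc m) (h(Suc m:=k)))"
  shows "measure M (S \<inter> F m h) \<le> measure M (F m h) * Wf p f (h m)"
proof -
  define I where "I = (\<integral>\<^sup>+k. ennreal (p (h m) k * f k) \<partial>count_space (UNIV - {h m}))"
  define mF where "mF = measure M (F m h)"
  have mF0: "0 \<le> mF" unfolding mF_def by simp
  have "ennreal (measure M (S \<inter> F m h)) = emeasure M (S \<inter> F m h)" by (simp add: emeasure_eq_measure)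
  also have "\<dots> = (\<integral>\<^sup>+k. emeasure M (S \<inter> H (Suc m) (h(Suc m := k))) \<partial>count_space (UNIV - {h m}))"
    by (rule L4) simp
  also have "\<dots> \<le> (\<integral>\<^sup>+k. ennreal mF * ennreal (p (h m) k * f k) \<partial>count_space (UNIV - {h m}))"
  proof (intro nn_integral_mono)
    fix k assume "k \<in> space (count_space (UNIV - {h m}))"
    then have k: "k \<noteq> h m" by auto
    have "emeasure M (S \<inter> H (Suc m) (h(Suc m := k))) = ennreal (measure M (S \<inter> H (Suc m) (h(Suc m := k))))"
      by (simp add: emeasure_eq_measure)
    also have "\<dots> \<le> ennreal (f k * measure M (H (Suc m) (h(Suc m:=k))))"
      using bnd[OF k] by (rule ennreal_leI)
    also have "\<dots> = ennreal mF * ennreal (p (h m) k * f k)"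
      using L2[of k h m, OF k] mF0 f0[of k] pnn[of "h m" k] unfolding mF_def
      by (simp add: ennreal_mult[symmetric] mult_ac)
    finally show "emeasure M (S \<inter> H (Suc m) (h(Suc m := k))) \<le> ennreal mF * ennreal (p (h m) k * f k)" .
  qed
  also have "\<dots> = ennreal mF * I"
    unfolding I_def by (simp add: nn_integral_cmult)
  finally have le1: "ennreal (measure M (S \<inter> F m h)) \<le> ennreal mF * I" .
  have "measure M (S \<inter> F m h) \<le> mF" unfolding mF_def by (intro finite_measure_mono) auto
  then have le2: "ennreal (measure M (S \<inter> F m h)) \<le> ennreal mF * 1" by (simp add: ennreal_leI)
  have "ennreal (measure M (S \<inter> F m h)) \<le> ennreal mF * min 1 I"
  proof (cases "I \<le> 1")
    case True then show ?thesis using le1 by (simp add: min_absorb2)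
  next
    case False then show ?thesis using le2 by (simp add: min_absorb1)
  qed
  also have "\<dots> = ennreal (mF * Wf p f (h m))"
    using mF0 by (simp add: ennreal_mult Wf_nonneg Wf_enn I_def)
  finally show ?thesis unfolding mF_def
    by (subst (asm) ennreal_le_iff) (auto intro!: mult_nonneg_nonneg simp: Wf_def)
qed

lemma hit_full: assumes "\<delta> \<le> real_of_int \<bar>h m\<bar>" "m \<le> t" shows "Hit m \<inter> H m h = H m h"
  using assms unfolding Hit_def hist_event_def by force

lemma hit_empty_t: assumes "\<not> \<delta> \<le> real_of_int \<bar>h t\<bar>" shows "Hit t \<inter> H t h = {}"
  using assms unfolding Hit_def hist_event_def by force

lemma ind_low: assumes c01: "\<And>m i. 0 \<le> c m i \<and> c m i \<le> 1"
  and rate: "\<And>m h. c m (h m) * measure M (H m h) \<le> measure M (F m h)"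
  shows "m + n = t \<Longrightarrow> uu p c \<delta> t n (h m) * measure M (H m h) \<le> measure M (Hit m \<inter> H m h)"
proof (induction n arbitrary: m h)
  case 0
  show ?case
  proof (cases "\<delta> \<le> real_of_int \<bar>h m\<bar>")
    case True then show ?thesis using hit_full[of h m, OF True] 0 by simp
  next
    case False then show ?thesis by simp
  qed
next
  case (Suc n)
  show ?case
  proof (cases "\<delta> \<le> real_of_int \<bar>h m\<bar>")
    case True then show ?thesis using hit_full[of h m, OF True] Suc.prems by simp
  next
    case False
    define i where "i = h m"
    define a where "a = uu p c \<delta> t n i"
    define w where "w = Wf p (uu p c \<delta> t n) i"
    define cc where "cc = c m i"
    define P where "P = measure M (H m h)"
    define J where "J = measure M (F m h)"
    have tm: "t - Suc n = m" using Suc.prems by simp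
    have u: "uu p c \<delta> t (Suc n) (h m) = (1 - cc) * a + cc * w"
      using False by (simp add: tm a_def w_def cc_def i_def)
    have aw: "a \<le> w" using uu_mono[where c=c and p=p and \<delta>=\<delta> and t=t and n=n, OF c01 pnn] False unfolding a_def w_def i_def by blast
    have r: "cc * P \<le> J" using rate[of m h] unfolding cc_def P_def J_def i_def .
    have e: "measure M (Hit m \<inter> H m h) = measure M (Hit (Suc m) \<inter> H (Suc m) (h(Suc m := h m))) + measure M (Hit (Suc m) \<inter> F m h)"
      using L5[of h m, OF False] L6[of "Hit (Suc m)" m h] by simp
    have sm: "Suc m + n = t" using Suc.prems by simp
    have ih: "a * measure M (H (Suc m) (h(Suc m := h m))) \<le> measure M (Hit (Suc m) \<inter> H (Suc m) (h(Suc m := h m)))"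
      using Suc.IH[of "Suc m" "h(Suc m := h m)", OF sm] unfolding fun_upd_same a_def i_def .
    then have b1: "a * (P - J) \<le> measure M (Hit (Suc m) \<inter> H (Suc m) (h(Suc m := h m)))" unfolding L3 P_def J_def .
    have b2: "J * w \<le> measure M (Hit (Suc m) \<inter> F m h)"
      unfolding J_def w_def i_def
    proof (rule lowF)
      show "\<And>k. 0 \<le> uu p c \<delta> t n k" using uu_range[where c=c, OF c01] by blast
      fix k assume "k \<noteq> h m"
      show "uu p c \<delta> t n k * measure M (H (Suc m) (h(Suc m := k))) \<le> measure M (Hit (Suc m) \<inter> H (Suc m) (h(Suc m := k)))"
        using Suc.IH[of "Suc m" "h(Suc m := k)", OF sm] unfolding fun_upd_same .
    qed simp
    have "0 \<le> (J - cc * P) * (w - a)" using r aw by simp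
    then have "((1 - cc) * a + cc * w) * P \<le> a * (P - J) + J * w" by (simp add: algebra_simps)
    then show ?thesis using e b1 b2 unfolding u P_def by linarith
  qed
qed

lemma ind_up: assumes c01: "\<And>m i. 0 \<le> c m i \<and> c m i \<le> 1"
  and rate: "\<And>m h. measure M (F m h) \<le> c m (h m) * measure M (H m h)"
  shows "m + n = t \<Longrightarrow> measure M (Hit m \<inter> H m h) \<le> uu p c \<delta> t n (h m) * measure M (H m h)"
proof (induction n arbitrary: m h)
  case 0
  show ?case
  proof (cases "\<delta> \<le> real_of_int \<bar>h m\<bar>")
    case True then show ?thesis using hit_full[of h m, OF True] 0 by simp
  next
    case False then show ?thesis using hit_empty_t[of h] 0 by simp
  qed
next
  case (Suc n)
  show ?case
  proof (cases "\<delta> \<le> real_of_int \<bar>h m\<bar>")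
    case True then show ?thesis using hit_full[of h m, OF True] Suc.prems by simp
  next
    case False
    define i where "i = h m"
    define a where "a = uu p c \<delta> t n i"
    define w where "w = Wf p (uu p c \<delta> t n) i"
    define cc where "cc = c m i"
    define P where "P = measure M (H m h)"
    define J where "J = measure M (F m h)"
    have tm: "t - Suc n = m" using Suc.prems by simp
    have u: "uu p c \<delta> t (Suc n) (h m) = (1 - cc) * a + cc * w"
      using False by (simp add: tm a_def w_def cc_def i_def)
    have aw: "a \<le> w" using uu_mono[where c=c and p=p and \<delta>=\<delta> and t=t and n=n, OF c01 pnn] False unfolding a_def w_def i_def by blast
    have r: "J \<le> cc * P" using rate[of m h] unfolding cc_def P_def J_def i_def .
    have e: "measure M (Hit m \<inter> H m h) = measure M (Hit (Suc m) \<inter> H (Suc m) (h(Suc m := h m))) + measure M (Hit (Suc m) \<inter> F m h)"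
      using L5[of h m, OF False] L6[of "Hit (Suc m)" m h] by simp
    have sm: "Suc m + n = t" using Suc.prems by simp
    have ih: "measure M (Hit (Suc m) \<inter> H (Suc m) (h(Suc m := h m))) \<le> a * measure M (H (Suc m) (h(Suc m := h m)))"
      using Suc.IH[of "Suc m" "h(Suc m := h m)", OF sm] unfolding fun_upd_same a_def i_def .
    then have b1: "measure M (Hit (Suc m) \<inter> H (Suc m) (h(Suc m := h m))) \<le> a * (P - J)" unfolding L3 P_def J_def .
    have b2: "measure M (Hit (Suc m) \<inter> F m h) \<le> J * w"
      unfolding J_def w_def i_def
    proof (rule upF)
      show "\<And>k. 0 \<le> uu p c \<delta> t n k" using uu_range[where c=c, OF c01] by blast
      fix k assume "k \<noteq> h m"
      show "measure M (Hit (Suc m) \<inter> H (Suc m) (h(Suc m := k))) \<le> uu p c \<delta> t n k * measure M (H (Suc m) (h(Suc m := k)))"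
        using Suc.IH[of "Suc m" "h(Suc m := k)", OF sm] unfolding fun_upd_same .
    qed simp
    have "0 \<le> (cc * P - J) * (w - a)" using r aw by simp
    then have "a * (P - J) + J * w \<le> ((1 - cc) * a + cc * w) * P" by (simp add: algebra_simps)
    then show ?thesis using e b1 b2 unfolding u P_def by linarith
  qed
qed

lemma Hit0_decomp: "emeasure M (Hit 0) = (\<integral>\<^sup>+i. emeasure M (Hit 0 \<inter> H 0 (\<lambda>_. i)) \<partial>count_space UNIV)"
proof -
  have eq: "Hit 0 = (\<Union>i\<in>UNIV. Hit 0 \<inter> H 0 (\<lambda>_. i))"
    unfolding Hit_def hist_event_def by auto
  have d: "disjoint_family_on (\<lambda>i. Hit 0 \<inter> H 0 (\<lambda>_. i)) UNIV"
    unfolding disjoint_family_on_def hist_event_def by auto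
  have "emeasure M (\<Union>i\<in>UNIV. Hit 0 \<inter> H 0 (\<lambda>_. i)) = (\<integral>\<^sup>+i. emeasure M (Hit 0 \<inter> H 0 (\<lambda>_. i)) \<partial>count_space UNIV)"
  proof (rule emeasure_UN_countable)
    fix i :: int
    show "Hit 0 \<inter> H 0 (\<lambda>_. i) \<in> sets M" using sets_Hit sets_hist by blast
  qed (use d in auto)
  then show ?thesis using eq by simp
qed

end

theorem proposition1:
  fixes M :: "'a measure" and A B :: "nat \<Rightarrow> 'a \<Rightarrow> int" and p :: "int \<Rightarrow> int \<Rightarrow> real"
  assumes "prob_space M"
    and "\<And>m. A m \<in> measurable M (count_space UNIV)"
    and "\<And>m. B m \<in> measurable M (count_space UNIV)"
    and "\<And>x. x \<in> space M \<Longrightarrow> A 0 x = B 0 x"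
    and "\<And>i k. 0 \<le> p i k \<and> p i k \<le> 1"
    and "jump_kernel M A p"
    and "jump_kernel M B p"
    and "\<And>m i h g. h m = i \<Longrightarrow> g m = i \<Longrightarrow>
           measure M (hist_event M A m h) > 0 \<Longrightarrow> measure M (hist_event M B m g) > 0 \<Longrightarrow>
           cprob M {x \<in> space M. A (Suc m) x \<noteq> i} (hist_event M A m h)
             \<ge> cprob M {x \<in> space M. B (Suc m) x \<noteq> i} (hist_event M B m g)"
    and "(\<delta>::real) > 0"
  shows "measure M {x \<in> space M. Max ((\<lambda>m. real_of_int \<bar>A m x\<bar>) ` {0..t}) \<ge> \<delta>}
           \<ge> measure M {x \<in> space M. Max ((\<lambda>m. real_of_int \<bar>B m x\<bar>) ` {0..t}) \<ge> \<delta>}"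
proof -
  interpret jA: jproc M A p \<delta> t
  proof (rule jproc.intro[OF assms(1)], rule jproc_axioms.intro)
    show "\<And>m. A m \<in> measurable M (count_space UNIV)" by (rule assms(2))
    show "jump_kernel M A p" by (rule assms(6))
    show "\<And>i k. 0 \<le> p i k" using assms(5) by blast
  qed
  interpret jB: jproc M B p \<delta> t
  proof (rule jproc.intro[OF assms(1)], rule jproc_axioms.intro)
    show "\<And>m. B m \<in> measurable M (count_space UNIV)" by (rule assms(3))
    show "jump_kernel M B p" by (rule assms(7))
    show "\<And>i k. 0 \<le> p i k" using assms(5) by blast
  qed
  define rt where "rt X m h = cprob M {x \<in> space M. X (Suc m) x \<noteq> h m} (hist_event M X m h)"
    for X :: "nat \<Rightarrow> 'a \<Rightarrow> int" and m h
  define S where "S m i = {rt B m g | g. g m = i \<and> measure M (hist_event M B m g) > 0} \<union> {0}" for m i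
  define cc where "cc m i = Sup (S m i)" for m i
  have rtA: "rt A m h = measure M (jA.F m h) / measure M (jA.H m h)" for m h
    unfolding rt_def cprob_def jA.F_def ..
  have rtB: "rt B m h = measure M (jB.F m h) / measure M (jB.H m h)" for m h
    unfolding rt_def cprob_def jB.F_def ..
  have FA: "measure M (jA.F m h) \<le> measure M (jA.H m h)" for m h
    unfolding jA.F_def by (intro jA.finite_measure_mono) auto
  have FB: "measure M (jB.F m h) \<le> measure M (jB.H m h)" for m h
    unfolding jB.F_def by (intro jA.finite_measure_mono) auto
  have S_le1: "x \<le> 1" if "x \<in> S m i" for x m i
  proof -
    from that consider "x = 0" | g where "x = rt B m g" "measure M (hist_event M B m g) > 0"
      unfolding S_def by blast
    then show ?thesis
    proof cases
      case 2 then show ?thesis using FB[of m g] unfolding rtB by simp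
    qed simp
  qed
  have bdd: "bdd_above (S m i)" for m i using S_le1 by (auto intro!: bdd_aboveI)
  have c01: "0 \<le> cc m i \<and> cc m i \<le> 1" for m i
  proof
    show "0 \<le> cc m i" unfolding cc_def by (rule cSup_upper[OF _ bdd]) (simp add: S_def)
    show "cc m i \<le> 1" unfolding cc_def
    proof (rule cSup_least)
      show "S m i \<noteq> {}" by (simp add: S_def)
    qed (rule S_le1)
  qed
  have rateA: "cc m (h m) * measure M (jA.H m h) \<le> measure M (jA.F m h)" for m h
  proof (cases "measure M (jA.H m h) > 0")
    case False
    then have "measure M (jA.H m h) = 0" using measure_nonneg[of M "jA.H m h"] by linarith
    then show ?thesis by simp
  next
    case True
    have "cc m (h m) \<le> rt A m h" unfolding cc_def
    proof (rule cSup_least)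
      show "S m (h m) \<noteq> {}" by (simp add: S_def)
      fix x assume "x \<in> S m (h m)"
      then consider "x = 0" | g where "x = rt B m g" "g m = h m" "measure M (hist_event M B m g) > 0"
        unfolding S_def by blast
      then show "x \<le> rt A m h"
      proof cases
        case 1 then show ?thesis unfolding rtA by simp
      next
        case 2 then show ?thesis using assms(8)[of h m "h m" g] True unfolding rt_def by simp
      qed
    qed
    then have "cc m (h m) * measure M (jA.H m h) \<le> rt A m h * measure M (jA.H m h)"
      by (simp add: mult_right_mono)
    also have "\<dots> = measure M (jA.F m h)" unfolding rtA using True by simp
    finally show ?thesis .
  qed
  have rateB: "measure M (jB.F m h) \<le> cc m (h m) * measure M (jB.H m h)" for m h
  proof (cases "measure M (jB.H m h) > 0")
    case False
    then have "measure M (jB.H m h) = 0" using measure_nonneg[of M "jB.H m h"] by linarith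
    then show ?thesis using FB[of m h] by simp
  next
    case True
    have "rt B m h \<le> cc m (h m)" unfolding cc_def
      by (rule cSup_upper[OF _ bdd]) (use True in \<open>auto simp: S_def\<close>)
    then have "rt B m h * measure M (jB.H m h) \<le> cc m (h m) * measure M (jB.H m h)"
      by (simp add: mult_right_mono)
    moreover have "rt B m h * measure M (jB.H m h) = measure M (jB.F m h)" unfolding rtB using True by simp
    ultimately show ?thesis by simp
  qed
  have HAB: "jA.H 0 h = jB.H 0 h" for h
    unfolding hist_event_def using assms(4) by auto
  have lowA: "uu p cc \<delta> t t i * measure M (jA.H 0 (\<lambda>_. i)) \<le> measure M (jA.Hit 0 \<inter> jA.H 0 (\<lambda>_. i))" for i
    using jA.ind_low[where c=cc, OF c01 rateA, of 0 t "\<lambda>_. i"] by simp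
  have upB: "measure M (jB.Hit 0 \<inter> jB.H 0 (\<lambda>_. i)) \<le> uu p cc \<delta> t t i * measure M (jB.H 0 (\<lambda>_. i))" for i
    using jB.ind_up[where c=cc, OF c01 rateB, of 0 t "\<lambda>_. i"] by simp
  have "emeasure M (jB.Hit 0) = (\<integral>\<^sup>+i. emeasure M (jB.Hit 0 \<inter> jB.H 0 (\<lambda>_. i)) \<partial>count_space UNIV)"
    by (rule jB.Hit0_decomp)
  also have "\<dots> \<le> (\<integral>\<^sup>+i. ennreal (uu p cc \<delta> t t i * measure M (jB.H 0 (\<lambda>_. i))) \<partial>count_space UNIV)"
    by (intro nn_integral_mono) (simp add: jA.emeasure_eq_measure ennreal_leI upB)
  also have "\<dots> = (\<integral>\<^sup>+i. ennreal (uu p cc \<delta> t t i * measure M (jA.H 0 (\<lambda>_. i))) \<partial>count_space UNIV)"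
    unfolding HAB ..
  also have "\<dots> \<le> (\<integral>\<^sup>+i. emeasure M (jA.Hit 0 \<inter> jA.H 0 (\<lambda>_. i)) \<partial>count_space UNIV)"
    by (intro nn_integral_mono) (simp add: jA.emeasure_eq_measure ennreal_leI lowA)
  also have "\<dots> = emeasure M (jA.Hit 0)"
    by (rule jA.Hit0_decomp[symmetric])
  finally have le: "measure M (jB.Hit 0) \<le> measure M (jA.Hit 0)"
    by (simp add: jA.emeasure_eq_measure ennreal_le_iff)
  have setA: "{x \<in> space M. Max ((\<lambda>m. real_of_int \<bar>A m x\<bar>) ` {0..t}) \<ge> \<delta>} = jA.Hit 0"
    unfolding jA.Hit_def by (auto simp: Max_ge_iff)
  have setB: "{x \<in> space M. Max ((\<lambda>m. real_of_int \<bar>B m x\<bar>) ` {0..t}) \<ge> \<delta>} = jB.Hit 0"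
    unfolding jB.Hit_def by (auto simp: Max_ge_iff)
  show ?thesis unfolding setA setB using le .
qed

end
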